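(* Fix $\lambda\ge 0$, an angular frequency $\omega>0$, an integer $n\ge 1$, layer thicknesses $d_1,\dots,d_{n-1}>0$, magnetic permeabilities $\mu_1,\dots,\mu_n>0$ and electrical conductivities $\sigma_1,\dots,\sigma_n>0$. For $k=1,\dots,n$ let $u_k=\sqrt{\lambda^2+\mathrm{i}\sigma_k\mu_k\omega}$ and $N_k=\dfrac{u_k}{\mathrm{i}\mu_k\omega}$, and define the surface admittances by $Y_n=N_n$ and, for $k=n-1,\dots,1$, $$Y_k=N_k\,\frac{Y_{k+1}+N_k\tanh(d_ku_k)}{N_k+Y_{k+1}\tanh(d_ku_k)},$$ regarded as functions of $\boldsymbol\sigma=(\sigma_1,\dots,\sigma_n)$. For $k=1,\dots,n-1$ set $$a_k=\frac{Y_{k+1}+N_k\tanh(d_ku_k)}{N_k+Y_{k+1}\tanh(d_ku_k)},\qquad b_k=\frac{1}{[N_k+Y_{k+1}\tanh(d_ku_k)]^2\cosh^2(d_ku_k)}.$$ Then the partial derivatives $Y'_{kj}=\partial Y_k/\partial\sigma_j$, $k,j=1,\dots,n$, satisfy $$Y'_{nn}=\frac{1}{2u_n},\qquad Y'_{nj}=0\ \ (j=1,\dots,n-1),$$ and, for $k=n-1,n-2,\dots,1$, $$Y'_{kj}=N_k^2\,b_k\,Y'_{k+1,j}\quad (j=n,n-1,\dots,k+1),$$ $$Y'_{kk}=\frac{a_k}{2u_k}+\frac{b_k}{2}\Big[N_k^2d_k-Y_{k+1}\Big(d_kY_{k+1}+\frac{1}{\mathrm{i}\mu_k\omega}\Big)\Big],$$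 $$Y'_{kj}=0\quad (j=k-1,k-2,\dots,1).$$
   Context: This models a layered soil with $n$ horizontal layers, the $k$-th having thickness $d_k$ (the bottom layer $n$ is infinitely thick), conductivity $\sigma_k$ and permeability $\mu_k$; $\mathrm{i}=\sqrt{-1}$ and the square root is the principal branch. $N_k$ is called the characteristic admittance and $Y_k$ the surface admittance at the top of layer $k$. All quantities depend on the auxiliary variable $\lambda$, suppressed from notation, and the derivatives are taken with respect to the conductivities with $\lambda,\omega,d_k,\mu_k$ fixed (assuming the denominators appearing are nonzero). *)

theory Defs
  imports Complex_Main
begin

text \<open>Layers are indexed 1..n; conductivities, permeabilities, thicknesses are
functions nat => real. lam = auxiliary variable lambda, w = angular frequency omega.\<close>

definition uk :: "real \<Rightarrow> real \<Rightarrow> (nat \<Rightarrow> real) \<Rightarrow> (nat \<Rightarrow> real) \<Rightarrow> nat \<Rightarrow> complex" where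
  "uk lam w mu sigma k = csqrt (complex_of_real (lam ^ 2) + \<i> * complex_of_real (sigma k * mu k * w))"

definition Nk :: "real \<Rightarrow> real \<Rightarrow> (nat \<Rightarrow> real) \<Rightarrow> (nat \<Rightarrow> real) \<Rightarrow> nat \<Rightarrow> complex" where
  "Nk lam w mu sigma k = uk lam w mu sigma k / (\<i> * complex_of_real (mu k * w))"

function Yk :: "real \<Rightarrow> real \<Rightarrow> (nat \<Rightarrow> real) \<Rightarrow> (nat \<Rightarrow> real) \<Rightarrow> nat \<Rightarrow> (nat \<Rightarrow> real) \<Rightarrow> nat \<Rightarrow> complex" where
  "Yk lam w d mu n sigma k =
     (if n \<le> k then Nk lam w mu sigma n
      else (let N = Nk lam w mu sigma k; Y1 = Yk lam w d mu n sigma (Suc k);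
                t = tanh (complex_of_real (d k) * uk lam w mu sigma k)
            in N * ((Y1 + N * t) / (N + Y1 * t))))"
  by pat_completeness auto
termination
  by (relation "measure (\<lambda>(lam, w, d, mu, n, sigma, k). n - k)") auto

declare Yk.simps [simp del]

definition ak :: "real \<Rightarrow> real \<Rightarrow> (nat \<Rightarrow> real) \<Rightarrow> (nat \<Rightarrow> real) \<Rightarrow> nat \<Rightarrow> (nat \<Rightarrow> real) \<Rightarrow> nat \<Rightarrow> complex" where
  "ak lam w d mu n sigma k =
     (let N = Nk lam w mu sigma k; Y1 = Yk lam w d mu n sigma (Suc k);
          t = tanh (complex_of_real (d k) * uk lam w mu sigma k)
      in (Y1 + N * t) / (N + Y1 * t))"

definition bk :: "real \<Rightarrow> real \<Rightarrow> (nat \<Rightarrow> real) \<Rightarrow> (nat \<Rightarrow> real) \<Rightarrow> nat \<Rightarrow> (nat \<Rightarrow> real) \<Rightarrow> nat \<Rightarrow> complex" where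
  "bk lam w d mu n sigma k =
     (let N = Nk lam w mu sigma k; Y1 = Yk lam w d mu n sigma (Suc k);
          x = complex_of_real (d k) * uk lam w mu sigma k
      in 1 / ((N + Y1 * tanh x) ^ 2 * (cosh x) ^ 2))"

end

theory Submission imports Defs "HOL-Analysis.Analysis" begin
lemma hvd_divide:
  fixes f g :: "real \<Rightarrow> complex"
  assumes "(f has_vector_derivative f') (at x)" "(g has_vector_derivative g') (at x)" "g x \<noteq> 0"
  shows "((\<lambda>t. f t / g t) has_vector_derivative ((f' * g x - f x * g') / (g x)^2)) (at x)"
  using has_derivative_divide'[OF assms(1,2)[unfolded has_vector_derivative_def] assms(3)]
  unfolding has_vector_derivative_def
  apply (rule has_derivative_eq_rhs)
  using assms(3) by (auto simp: fun_eq_iff scaleR_conv_of_real field_simps power2_eq_square)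


lemma tanh_deriv:
  fixes z :: complex
  assumes "cosh z \<noteq> 0"
  shows "(tanh has_field_derivative (1 - tanh z ^ 2)) (at z)"
  using has_field_derivative_tanh[of "\<lambda>x. x" z 1 UNIV] assms by simp

lemma tanh_sq: fixes z :: complex assumes "cosh z \<noteq> 0" shows "1 - tanh z ^ 2 = 1 / (cosh z)^2"
proof -
  have "cosh z ^ 2 - sinh z ^ 2 = 1" using cosh_square_eq[of z] by simp
  moreover have "1 - tanh z ^ 2 = (cosh z ^ 2 - sinh z ^ 2) / cosh z ^ 2"
    using assms by (simp add: tanh_def power_divide diff_divide_distrib)
  ultimately show ?thesis by simp
qed

lemma u_local: "s' k = s k \<Longrightarrow> uk lam w mu s' k = uk lam w mu s k"
  by (simp add: uk_def)
lemma N_local: "s' k = s k \<Longrightarrow> Nk lam w mu s' k = Nk lam w mu s k"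
  by (simp add: Nk_def uk_def)



lemma Yk_ge: "n \<le> k \<Longrightarrow> Yk lam w d mu n s k = Nk lam w mu s n"
  by (subst Yk.simps) simp


lemma Yk_lt: "k < n \<Longrightarrow> Yk lam w d mu n s k =
   Nk lam w mu s k * ((Yk lam w d mu n s (Suc k) + Nk lam w mu s k * tanh (complex_of_real (d k) * uk lam w mu s k))
     / (Nk lam w mu s k + Yk lam w d mu n s (Suc k) * tanh (complex_of_real (d k) * uk lam w mu s k)))"
  apply (rule trans[OF Yk.simps])
  apply (simp only: Let_def not_le[symmetric] if_False)
  done

lemma Y_local:
  assumes "k \<le> n" "\<forall>i\<ge>k. s' i = s i"
  shows "Yk lam w d mu n s' k = Yk lam w d mu n s k"
  using assms
proof (induction k rule: inc_induct)
  case base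
  then show ?case by (simp add: Yk_ge Nk_def uk_def)
next
  case (step m)
  then have "Yk lam w d mu n s' (Suc m) = Yk lam w d mu n s (Suc m)" by auto
  with step show ?case by (simp add: Yk_lt[where k=m] Nk_def uk_def)
qed

lemma u_nz:
  assumes "s k * mu k * w > 0"
  shows "complex_of_real (lam ^ 2) + \<i> * complex_of_real (s k * mu k * w) \<notin> \<real>\<^sub>\<le>\<^sub>0"
    "uk lam w mu s k \<noteq> 0"
proof -
  have "Im (complex_of_real (lam ^ 2) + \<i> * complex_of_real (s k * mu k * w)) \<noteq> 0"
    using assms by (simp del: of_real_mult) (metis less_irrefl mult_eq_0_iff)
  then show "complex_of_real (lam ^ 2) + \<i> * complex_of_real (s k * mu k * w) \<notin> \<real>\<^sub>\<le>\<^sub>0"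
    using complex_is_Real_iff nonpos_Reals_subset_Reals by blast
  then show "uk lam w mu s k \<noteq> 0" unfolding uk_def
    by (metis csqrt_eq_0 nonpos_Reals_zero_I)
qed

lemma u_deriv:
  assumes "s k * mu k * w > 0"
  shows "((\<lambda>t. uk lam w mu (s(k:=t)) k) has_vector_derivative
           (\<i> * complex_of_real (mu k * w) / (2 * uk lam w mu s k))) (at (s k))"
proof -
  define g where "g z = csqrt (complex_of_real (lam ^ 2) + \<i> * (z * complex_of_real (mu k * w)))" for z
  have eq: "(\<lambda>t. uk lam w mu (s(k:=t)) k) = (\<lambda>t. g (of_real t))"
    by (rule ext) (simp add: uk_def g_def mult.assoc)
  have "(g has_field_derivative (\<i> * complex_of_real (mu k * w) / (2 * uk lam w mu s k))) (at (of_real (s k)))"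
    unfolding g_def
    apply (rule derivative_eq_intros refl)+
    using u_nz(1)[where lam=lam and s=s and k=k and mu=mu and w=w, OF assms] apply (simp add: ac_simps)
    by (simp add: uk_def ac_simps)
  then show ?thesis unfolding eq by (rule has_vector_derivative_real_field)
qed

lemma num_id:
  fixes N Y T A B :: complex
  shows "(N * (B * (1 - T^2)) + A * T) * (N + Y*T) - (Y + N*T) * (A + Y * (B * (1 - T^2)))
     = (1 - T^2) * (B * (N^2 - Y^2) - Y * A)"
  by (simp add: algebra_simps power2_eq_square)

lemma gen_id: fixes N E B X Y A :: complex
  shows "N * (E * (B*X - Y*A)) = E * ((N*B)*X - Y*(N*A))"
  by (simp add: algebra_simps)

lemma fin_id: fixes c C D N Y dd :: complex assumes "c \<noteq> 0" "C \<noteq> 0" "D \<noteq> 0"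
  shows "(1 / C^2) * (dd / 2 * (N^2 - Y^2) - Y * (1 / (2*c))) / D^2 = (1 / (D^2 * C^2)) / 2 * (N^2 * dd - Y * (dd * Y + 1 / c))"
  using assms by (simp add: field_simps power2_eq_square)

lemma alg_kk:
  fixes N Y T C u c dd :: complex
  assumes u: "u \<noteq> 0" and c: "c \<noteq> 0" and C: "C \<noteq> 0" and D: "N + Y*T \<noteq> 0"
    and N: "N = u / c" and T: "1 - T^2 = 1 / C^2"
  shows "N * (((N * (dd * (c / (2*u)) * (1 - T^2)) + 1/(2*u) * T) * (N + Y*T)
              - (Y + N*T) * (1/(2*u) + Y * (dd * (c / (2*u)) * (1 - T^2)))) / (N + Y*T)^2)
         + 1/(2*u) * ((Y + N*T) / (N + Y*T))
       = ((Y + N*T) / (N + Y*T)) / (2*u)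
         + (1 / ((N + Y*T)^2 * C^2)) / 2 * (N^2 * dd - Y * (dd * Y + 1 / c))"
proof -
  have num: "(N * (dd * (c / (2*u)) * (1 - T^2)) + 1/(2*u) * T) * (N + Y*T)
              - (Y + N*T) * (1/(2*u) + Y * (dd * (c / (2*u)) * (1 - T^2)))
           = (1 - T^2) * ((dd * (c / (2*u))) * (N^2 - Y^2) - Y * (1/(2*u)))"
    using num_id[of N "dd * (c / (2*u))" T "1/(2*u)" Y] by (simp add: mult.assoc)
  have NB: "N * (dd * (c / (2*u))) = dd / 2" using N u c by simp
  have NA: "N * (1/(2*u)) = 1 / (2*c)" using N u c by simp
  have "N * ((1 - T^2) * ((dd * (c / (2*u))) * (N^2 - Y^2) - Y * (1/(2*u))))
      = (1 - T^2) * ((N * (dd * (c / (2*u)))) * (N^2 - Y^2) - Y * (N * (1/(2*u))))"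
    using gen_id[of N "1 - T^2" "dd * (c / (2*u))" "N^2 - Y^2" Y "1/(2*u)"] .
  also have "\<dots> = (1 / C^2) * (dd / 2 * (N^2 - Y^2) - Y * (1 / (2*c)))"
    unfolding NB NA T ..
  finally have key: "N * ((1 - T^2) * ((dd * (c / (2*u))) * (N^2 - Y^2) - Y * (1/(2*u))))
      = (1 / C^2) * (dd / 2 * (N^2 - Y^2) - Y * (1 / (2*c)))" .
  have "N * (((N * (dd * (c / (2*u)) * (1 - T^2)) + 1/(2*u) * T) * (N + Y*T)
              - (Y + N*T) * (1/(2*u) + Y * (dd * (c / (2*u)) * (1 - T^2)))) / (N + Y*T)^2)
     = (N * ((1 - T^2) * ((dd * (c / (2*u))) * (N^2 - Y^2) - Y * (1/(2*u))))) / (N + Y*T)^2"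
    unfolding num by (rule times_divide_eq_right)
  also have "\<dots> = (1 / C^2) * (dd / 2 * (N^2 - Y^2) - Y * (1 / (2*c))) / (N + Y*T)^2"
    by (simp only: key)
  also have "\<dots> = (1 / ((N + Y*T)^2 * C^2)) / 2 * (N^2 * dd - Y * (dd * Y + 1 / c))"
    using fin_id[OF c C D] .
  finally show ?thesis by simp
qed

lemma alg_kj:
  fixes N Y T C Y' :: complex
  assumes C: "C \<noteq> 0" and D: "N + Y*T \<noteq> 0" and T: "1 - T^2 = 1 / C^2"
  shows "N * ((Y' * (N + Y*T) - (Y + N*T) * (Y' * T)) / (N + Y*T)^2)
       = N^2 * (1 / ((N + Y*T)^2 * C^2)) * Y'"
proof -
  have "Y' * (N + Y*T) - (Y + N*T) * (Y' * T) = N * Y' * (1 - T^2)"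
    by (simp add: algebra_simps power2_eq_square)
  also have "\<dots> = N * Y' / C^2" unfolding T by simp
  finally have e: "Y' * (N + Y*T) - (Y + N*T) * (Y' * T) = N * Y' / C^2" .
  show ?thesis apply (simp only: e) using C D by (simp add: field_simps power2_eq_square)
qed

lemma N_deriv:
  assumes "s k * mu k * w > 0"
  shows "((\<lambda>t. Nk lam w mu (s(k:=t)) k) has_vector_derivative (1 / (2 * uk lam w mu s k))) (at (s k))"
proof -
  have c: "\<i> * complex_of_real (mu k * w) \<noteq> 0" using assms by (auto simp del: of_real_mult)
  have u: "uk lam w mu s k \<noteq> 0" using u_nz(2)[where lam=lam and s=s and k=k and mu=mu and w=w, OF assms] .
  have eq: "(\<lambda>t. Nk lam w mu (s(k:=t)) k) = (\<lambda>t. uk lam w mu (s(k:=t)) k / (\<i> * complex_of_real (mu k * w)))"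
    by (rule ext) (simp add: Nk_def)
  show ?thesis unfolding eq
    apply (rule has_vector_derivative_eq_rhs[OF has_vector_derivative_divide[OF u_deriv[where lam=lam and s=s and k=k and mu=mu and w=w, OF assms]]])
    using c u by simp
qed

function Yd :: "real \<Rightarrow> real \<Rightarrow> (nat \<Rightarrow> real) \<Rightarrow> (nat \<Rightarrow> real) \<Rightarrow> nat \<Rightarrow> (nat \<Rightarrow> real) \<Rightarrow> nat \<Rightarrow> nat \<Rightarrow> complex" where
"Yd lam w d mu n s k j = (if n \<le> k then (if j = n then 1 / (2 * uk lam w mu s n) else 0)
  else if k < j then (Nk lam w mu s k)\<^sup>2 * bk lam w d mu n s k * Yd lam w d mu n s (Suc k) j
  else if j = k then ak lam w d mu n s k / (2 * uk lam w mu s k)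
           + bk lam w d mu n s k / 2 *
             ((Nk lam w mu s k)\<^sup>2 * complex_of_real (d k)
              - Yk lam w d mu n s (Suc k) *
                (complex_of_real (d k) * Yk lam w d mu n s (Suc k)
                 + 1 / (\<i> * complex_of_real (mu k * w))))
  else 0)"
  by pat_completeness auto
termination
  by (relation "Wellfounded.measure (\<lambda>(lam, w, d, mu, n, s, k, j). n - k)") auto

declare Yd.simps [simp del]

lemma main:
  assumes w: "w > 0" and mu: "\<forall>k\<in>{1..n}. mu k > 0" and sg: "\<forall>k\<in>{1..n}. s k > 0"
    and den: "\<forall>k\<in>{1..<n}.
           Nk lam w mu s k + Yk lam w d mu n s (Suc k)
             * tanh (complex_of_real (d k) * uk lam w mu s k) \<noteq> 0
         \<and> cosh (complex_of_real (d k) * uk lam w mu s k) \<noteq> 0"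
    and j: "j \<in> {1..n}" and k1: "1 \<le> k" and kn: "k \<le> n"
  shows "((\<lambda>t. Yk lam w d mu n (s(j:=t)) k) has_vector_derivative Yd lam w d mu n s k j) (at (s j))"
  using kn
proof (induction k rule: inc_induct)
  case base
  show ?case
  proof (cases "j = n")
    case True
    have pos: "s n * mu n * w > 0" using mu sg w j True by simp
    have eq: "(\<lambda>t. Yk lam w d mu n (s(j:=t)) n) = (\<lambda>t. Nk lam w mu (s(n:=t)) n)"
      by (rule ext) (simp add: Yk_ge True)
    show ?thesis unfolding eq using N_deriv[where lam=lam and s=s and k=n and mu=mu and w=w, OF pos] True by (simp add: Yd.simps)
  next
    case False
    have eq: "(\<lambda>t. Yk lam w d mu n (s(j:=t)) n) = (\<lambda>t. Nk lam w mu s n)"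
      using False by (intro ext) (simp add: Yk_ge Nk_def uk_def)
    show ?thesis unfolding eq using False by (simp add: Yd.simps)
  qed
next
  case (step m)
  have m1: "1 \<le> m" using k1 step.hyps by simp
  have mn: "m < n" using step.hyps by simp
  define N0 where "N0 = Nk lam w mu s m"
  define u0 where "u0 = uk lam w mu s m"
  define Y0 where "Y0 = Yk lam w d mu n s (Suc m)"
  define x0 where "x0 = complex_of_real (d m) * u0"
  define T0 where "T0 = tanh x0"
  define C0 where "C0 = cosh x0"
  have D0: "N0 + Y0 * T0 \<noteq> 0" and C0: "C0 \<noteq> 0"
    using den m1 mn unfolding N0_def Y0_def T0_def x0_def u0_def C0_def by auto
  have TC: "1 - T0^2 = 1 / C0^2" unfolding T0_def C0_def using tanh_sq C0 C0_def by blast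
  have bk: "bk lam w d mu n s m = 1 / ((N0 + Y0 * T0)^2 * C0^2)"
    by (simp add: bk_def Let_def N0_def Y0_def T0_def C0_def x0_def u0_def)
  have ak: "ak lam w d mu n s m = (Y0 + N0 * T0) / (N0 + Y0 * T0)"
    by (simp add: ak_def Let_def N0_def Y0_def T0_def x0_def u0_def)
  have unf: "\<And>s'. Yk lam w d mu n s' m = Nk lam w mu s' m * ((Yk lam w d mu n s' (Suc m) + Nk lam w mu s' m * tanh (complex_of_real (d m) * uk lam w mu s' m))
     / (Nk lam w mu s' m + Yk lam w d mu n s' (Suc m) * tanh (complex_of_real (d m) * uk lam w mu s' m)))"
    using Yk_lt[where k=m, OF mn] by blast
  consider "j < m" | "m < j" | "j = m" by linarith
  then show ?case
  proof cases
    case 1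
    have eq: "(\<lambda>t. Yk lam w d mu n (s(j:=t)) m) = (\<lambda>t. Yk lam w d mu n s m)"
      by (rule ext) (rule Y_local, use mn 1 in auto)
    have "Yd lam w d mu n s m j = 0" using 1 mn by (subst Yd.simps) simp
    then show ?thesis unfolding eq by simp
  next
    case 2
    define Y where "Y t = Yk lam w d mu n (s(j:=t)) (Suc m)" for t
    define Yd' where "Yd' = Yd lam w d mu n s (Suc m) j"
    have IH: "(Y has_vector_derivative Yd') (at (s j))"
      unfolding Y_def Yd'_def using step.IH by (simp add: fun_upd_def)
    have Ysj: "Y (s j) = Y0" by (simp add: Y_def Y0_def)
    have eq: "(\<lambda>t. Yk lam w d mu n (s(j:=t)) m) = (\<lambda>t. N0 * ((Y t + N0 * T0) / (N0 + Y t * T0)))"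
      apply (rule ext)
      apply (subst unf)
      using 2 by (simp add: Y_def N0_def T0_def x0_def u0_def Nk_def uk_def)
    have hnum: "((\<lambda>t. Y t + N0 * T0) has_vector_derivative Yd') (at (s j))"
      by (rule has_vector_derivative_eq_rhs[OF has_vector_derivative_add[OF IH has_vector_derivative_const]]) simp
    have hden: "((\<lambda>t. N0 + Y t * T0) has_vector_derivative Yd' * T0) (at (s j))"
      by (rule has_vector_derivative_eq_rhs[OF has_vector_derivative_add[OF has_vector_derivative_const has_vector_derivative_mult_left[OF IH]]]) simp
    have hq: "((\<lambda>t. (Y t + N0 * T0) / (N0 + Y t * T0)) has_vector_derivative
        (Yd' * (N0 + Y0 * T0) - (Y0 + N0 * T0) * (Yd' * T0)) / (N0 + Y0 * T0)^2) (at (s j))"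
      using hvd_divide[OF hnum hden] D0 unfolding Ysj by simp
    have "Yd lam w d mu n s m j = N0^2 * (1 / ((N0 + Y0 * T0)^2 * C0^2)) * Yd'"
      using 2 mn by (subst Yd.simps) (simp add: bk N0_def Yd'_def)
    also have "\<dots> = N0 * ((Yd' * (N0 + Y0 * T0) - (Y0 + N0 * T0) * (Yd' * T0)) / (N0 + Y0 * T0)^2)"
      using alg_kj[OF C0 D0 TC] by simp
    finally show ?thesis unfolding eq
      using has_vector_derivative_mult_right[OF hq, of N0] by simp
  next
    case 3
    have pos: "s m * mu m * w > 0" using mu sg w m1 mn by simp
    define c where "c = \<i> * complex_of_real (mu m * w)"
    have cnz: "c \<noteq> 0" using pos unfolding c_def by (auto simp del: of_real_mult)
    have u0nz: "u0 \<noteq> 0" unfolding u0_def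
      using u_nz(2)[where lam=lam and s=s and k=m and mu=mu and w=w, OF pos] .
    have Nu: "N0 = u0 / c" by (simp add: N0_def u0_def c_def Nk_def)
    define u where "u t = uk lam w mu (s(m:=t)) m" for t
    define N where "N t = Nk lam w mu (s(m:=t)) m" for t
    define T where "T t = tanh (complex_of_real (d m) * u t)" for t
    have hu: "(u has_vector_derivative c / (2 * u0)) (at (s m))"
      unfolding u_def c_def u0_def
      using u_deriv[where lam=lam and s=s and k=m and mu=mu and w=w, OF pos] by (simp add: fun_upd_def)
    have hN: "(N has_vector_derivative 1 / (2 * u0)) (at (s m))"
      unfolding N_def u0_def
      using N_deriv[where lam=lam and s=s and k=m and mu=mu and w=w, OF pos] by (simp add: fun_upd_def)
    have hx: "((\<lambda>t. complex_of_real (d m) * u t) has_vector_derivative complex_of_real (d m) * (c / (2 * u0))) (at (s m))"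
      by (rule has_vector_derivative_mult_right[OF hu])
    have usm: "u (s m) = u0" by (simp add: u_def u0_def)
    have Nsm: "N (s m) = N0" by (simp add: N_def N0_def)
    have Tsm: "T (s m) = T0" by (simp add: T_def T0_def x0_def usm)
    have Cx: "cosh ((\<lambda>t. complex_of_real (d m) * u t) (s m)) \<noteq> 0"
      using C0 by (simp add: usm C0_def x0_def)
    have hT0: "((tanh \<circ> (\<lambda>t. complex_of_real (d m) * u t)) has_vector_derivative
        complex_of_real (d m) * (c / (2 * u0)) * (1 - tanh ((\<lambda>t. complex_of_real (d m) * u t) (s m)) ^ 2)) (at (s m))"
      by (rule field_vector_diff_chain_at[OF hx tanh_deriv[OF Cx]])
    have hT: "(T has_vector_derivative complex_of_real (d m) * (c / (2 * u0)) * (1 - T0^2)) (at (s m))"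
      using hT0 unfolding T_def o_def by (simp add: usm T0_def x0_def)
    have Ysm: "\<And>t. Yk lam w d mu n (s(m:=t)) (Suc m) = Y0"
      unfolding Y0_def by (rule Y_local) (use mn in auto)
    have eq: "(\<lambda>t. Yk lam w d mu n (s(j:=t)) m) = (\<lambda>t. N t * ((Y0 + N t * T t) / (N t + Y0 * T t)))"
      apply (rule ext)
      apply (subst unf)
      using 3 by (simp add: Ysm N_def T_def u_def)
    have hnum: "((\<lambda>t. Y0 + N t * T t) has_vector_derivative
         N0 * (complex_of_real (d m) * (c / (2 * u0)) * (1 - T0^2)) + 1 / (2 * u0) * T0) (at (s m))"
      apply (rule has_vector_derivative_eq_rhs[OF has_vector_derivative_add[OF has_vector_derivative_const has_vector_derivative_mult[OF hN hT]]])
      by (simp add: Nsm Tsm)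
    have hden: "((\<lambda>t. N t + Y0 * T t) has_vector_derivative
         1 / (2 * u0) + Y0 * (complex_of_real (d m) * (c / (2 * u0)) * (1 - T0^2))) (at (s m))"
      by (rule has_vector_derivative_add[OF hN has_vector_derivative_mult_right[OF hT]])
    have hq: "((\<lambda>t. (Y0 + N t * T t) / (N t + Y0 * T t)) has_vector_derivative
        ((N0 * (complex_of_real (d m) * (c / (2 * u0)) * (1 - T0^2)) + 1 / (2 * u0) * T0) * (N0 + Y0 * T0)
         - (Y0 + N0 * T0) * (1 / (2 * u0) + Y0 * (complex_of_real (d m) * (c / (2 * u0)) * (1 - T0^2))))
         / (N0 + Y0 * T0)^2) (at (s m))"
      using hvd_divide[OF hnum hden] D0 by (simp add: Nsm Tsm)
    have hF: "((\<lambda>t. N t * ((Y0 + N t * T t) / (N t + Y0 * T t))) has_vector_derivative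
        N0 * (((N0 * (complex_of_real (d m) * (c / (2 * u0)) * (1 - T0^2)) + 1 / (2 * u0) * T0) * (N0 + Y0 * T0)
         - (Y0 + N0 * T0) * (1 / (2 * u0) + Y0 * (complex_of_real (d m) * (c / (2 * u0)) * (1 - T0^2))))
         / (N0 + Y0 * T0)^2) + 1 / (2 * u0) * ((Y0 + N0 * T0) / (N0 + Y0 * T0))) (at (s m))"
      using has_vector_derivative_mult[OF hN hq] by (simp add: Nsm Tsm)
    have "Yd lam w d mu n s m j = ((Y0 + N0 * T0) / (N0 + Y0 * T0)) / (2 * u0)
         + (1 / ((N0 + Y0 * T0)^2 * C0^2)) / 2 * (N0^2 * complex_of_real (d m) - Y0 * (complex_of_real (d m) * Y0 + 1 / c))"
      using 3 mn by (subst Yd.simps) (simp add: ak bk N0_def Y0_def u0_def c_def)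
    also have "\<dots> = N0 * (((N0 * (complex_of_real (d m) * (c / (2 * u0)) * (1 - T0^2)) + 1 / (2 * u0) * T0) * (N0 + Y0 * T0)
         - (Y0 + N0 * T0) * (1 / (2 * u0) + Y0 * (complex_of_real (d m) * (c / (2 * u0)) * (1 - T0^2))))
         / (N0 + Y0 * T0)^2) + 1 / (2 * u0) * ((Y0 + N0 * T0) / (N0 + Y0 * T0))"
      using alg_kk[OF u0nz cnz C0 D0 Nu TC] by simp
    finally show ?thesis unfolding eq using hF 3 by simp
  qed
qed

theorem lemma1:
  fixes lam w :: real and n :: nat and d mu sigma :: "nat \<Rightarrow> real"
  assumes "lam \<ge> 0" and "w > 0" and "n \<ge> 1"
    and "\<forall>k\<in>{1..<n}. d k > 0"
    and "\<forall>k\<in>{1..n}. mu k > 0"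
    and "\<forall>k\<in>{1..n}. sigma k > 0"
    and "\<forall>k\<in>{1..<n}.
           Nk lam w mu sigma k + Yk lam w d mu n sigma (Suc k)
             * tanh (complex_of_real (d k) * uk lam w mu sigma k) \<noteq> 0
         \<and> cosh (complex_of_real (d k) * uk lam w mu sigma k) \<noteq> 0"
  shows "\<exists>Y' :: nat \<Rightarrow> nat \<Rightarrow> complex.
    (\<forall>k\<in>{1..n}. \<forall>j\<in>{1..n}.
       ((\<lambda>t. Yk lam w d mu n (sigma(j := t)) k) has_vector_derivative Y' k j) (at (sigma j)))
    \<and> Y' n n = 1 / (2 * uk lam w mu sigma n)
    \<and> (\<forall>j\<in>{1..<n}. Y' n j = 0)
    \<and> (\<forall>k\<in>{1..<n}.
         (\<forall>j\<in>{k<..n}. Y' k j = (Nk lam w mu sigma k)\<^sup>2 * bk lam w d mu n sigma k * Y' (Suc k) j)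
       \<and> Y' k k = ak lam w d mu n sigma k / (2 * uk lam w mu sigma k)
           + bk lam w d mu n sigma k / 2 *
             ((Nk lam w mu sigma k)\<^sup>2 * complex_of_real (d k)
              - Yk lam w d mu n sigma (Suc k) *
                (complex_of_real (d k) * Yk lam w d mu n sigma (Suc k)
                 + 1 / (\<i> * complex_of_real (mu k * w))))
       \<and> (\<forall>j\<in>{1..<k}. Y' k j = 0))"
proof (intro exI[of _ "Yd lam w d mu n sigma"] conjI ballI)
  fix k j assume k: "k \<in> {1..n}" and j: "j \<in> {1..n}"
  show "((\<lambda>t. Yk lam w d mu n (sigma(j := t)) k) has_vector_derivative Yd lam w d mu n sigma k j) (at (sigma j))"
    using main[OF assms(2) assms(5) assms(6) assms(7) j] k by auto
next
  show "Yd lam w d mu n sigma n n = 1 / (2 * uk lam w mu sigma n)"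
    by (subst Yd.simps) simp
next
  fix j assume "j \<in> {1..<n}"
  then show "Yd lam w d mu n sigma n j = 0" by (subst Yd.simps) simp
next
  fix k j assume k: "k \<in> {1..<n}" and j: "j \<in> {k<..n}"
  then show "Yd lam w d mu n sigma k j = (Nk lam w mu sigma k)\<^sup>2 * bk lam w d mu n sigma k * Yd lam w d mu n sigma (Suc k) j"
    by (subst Yd.simps) simp
next
  fix k assume k: "k \<in> {1..<n}"
  then show "Yd lam w d mu n sigma k k = ak lam w d mu n sigma k / (2 * uk lam w mu sigma k)
           + bk lam w d mu n sigma k / 2 *
             ((Nk lam w mu sigma k)\<^sup>2 * complex_of_real (d k)
              - Yk lam w d mu n sigma (Suc k) *
                (complex_of_real (d k) * Yk lam w d mu n sigma (Suc k)
                 + 1 / (\<i> * complex_of_real (mu k * w))))"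
    by (subst Yd.simps) simp
next
  fix k j assume k: "k \<in> {1..<n}" and j: "j \<in> {1..<k}"
  then show "Yd lam w d mu n sigma k j = 0" by (subst Yd.simps) simp
qed

end
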